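(* Let $\zeta_*\in(0,1]$, $\gamma_*\in(0,1]$, and $\nu_*=(1-\zeta_* )\delta_0+\zeta_*\delta_{\gamma_*}$. Consider the optimization problem of minimizing $\|F_\nu-F_{\nu_*}\|_\infty$ over probability distributions $\nu$ on $\mathbb{R}$ subject to $\nu((0,\infty))\le\frac12\zeta_*$. Then the optimal point of this problem is \[ \nu_{OPT}=(1-\tfrac12\zeta_* )\delta_0+\tfrac12\zeta_*\delta_{2\gamma_*}, \] i.e., $\nu_{OPT}$ is feasible and attains the minimum value.
   Context: $\delta_x$ denotes the point mass at $x$. For a probability distribution $\nu$ on $\mathbb{R}$, $F_\nu(t):=\mathbb{P}_{\mu\sim\nu,\,X\sim\mathcal{N}(\mu,1)}(X\le t)$, and $\|\cdot\|_\infty$ is the sup norm over $t\in\mathbb{R}$. *)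

theory Defs
  imports "HOL-Probability.Probability"
begin

definition Phi :: "real \<Rightarrow> real" where
  "Phi x = measure (density lborel std_normal_density) {..x}"

text \<open>CDF of the Gaussian location mixture: X ~ N(mu,1) with mu ~ nu.
  P(X \<le> t) = E_nu[Phi(t - mu)].\<close>
definition mixCDF :: "real measure \<Rightarrow> real \<Rightarrow> real" where
  "mixCDF \<nu> t = (\<integral>\<mu>. Phi (t - \<mu>) \<partial>\<nu>)"

definition cdf_dist :: "real measure \<Rightarrow> real measure \<Rightarrow> real" where
  "cdf_dist \<nu> \<nu>' = (SUP t. \<bar>mixCDF \<nu> t - mixCDF \<nu>' t\<bar>)"

definition prob_dist :: "real measure \<Rightarrow> bool" where
  "prob_dist \<nu> \<longleftrightarrow> prob_space \<nu> \<and> sets \<nu> = sets borel"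

definition two_point :: "real \<Rightarrow> real \<Rightarrow> real \<Rightarrow> real measure" where
  "two_point x y p = distr (measure_pmf (bernoulli_pmf p)) borel (\<lambda>b. if b then y else x)"

end

theory Submission
  imports Defs
begin


abbreviation "NN \<equiv> density lborel std_normal_density"

lemma rd_NN: "real_distribution NN"
  unfolding real_distribution_def real_distribution_axioms_def
  using prob_space_normal_density[of 1 0] by simp

lemma Phi_cdf: "Phi = cdf NN"
  by (rule ext) (simp add: Phi_def cdf_def)

lemma Phi_nonneg: "0 \<le> Phi x" and Phi_le1: "Phi x \<le> 1"
  using finite_borel_measure.cdf_nonneg[OF real_distribution.finite_borel_measure_M[OF rd_NN]] real_distribution.cdf_bounded_prob[OF rd_NN]
  by (auto simp: Phi_cdf)

lemma Phi_mono: "x \<le> y \<Longrightarrow> Phi x \<le> Phi y"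
  using finite_borel_measure.cdf_nondecreasing[OF real_distribution.finite_borel_measure_M[OF rd_NN]] by (auto simp: Phi_cdf)

lemma Phi_diff: assumes "x \<le> y" shows "Phi y - Phi x = integral {x..y} std_normal_density"
proof (cases "x = y")
  case True then show ?thesis by simp
next
  case False
  then have xy: "x < y" using assms by simp
  have cont: "continuous_on {x..y} std_normal_density"
    unfolding std_normal_density_def by (intro continuous_intros) auto
  have hi: "(std_normal_density has_integral integral {x..y} std_normal_density) {x..y}"
    using integrable_continuous_real[OF cont] by (simp add: has_integral_integral)
  have hi2: "(std_normal_density has_integral integral {x..y} std_normal_density) {x<..y}"
  proof (subst has_integral_spike_set_eq[where T="{x..y}"])
    show "negligible {z \<in> {x..y} - {x<..y}. std_normal_density z \<noteq> 0}"
      by (rule negligible_subset[of "{x}"]) auto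
    show "negligible {z \<in> {x<..y} - {x..y}. std_normal_density z \<noteq> 0}" by (rule negligible_subset[of "{}"]) auto
  qed (rule hi)
  have I0: "0 \<le> integral {x..y} std_normal_density"
    by (rule integral_nonneg[OF integrable_continuous_real[OF cont]]) simp
  have "emeasure NN {x<..y} = (\<integral>\<^sup>+z. ennreal (std_normal_density z) * indicator {x<..y} z \<partial>lborel)"
    by (simp add: emeasure_density)
  also have "\<dots> = ennreal (integral {x..y} std_normal_density)"
    by (rule nn_integral_has_integral_lebesgue'[OF _ hi2]) simp
  finally have "measure NN {x<..y} = integral {x..y} std_normal_density"
    using I0 by (simp add: measure_def)
  then show ?thesis
    using finite_borel_measure.cdf_diff_eq[OF real_distribution.finite_borel_measure_M[OF rd_NN] xy] by (simp add: Phi_cdf)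
qed

lemma Phi_deriv: "(Phi has_real_derivative std_normal_density y) (at y)"
proof -
  define a where "a = y - 1"
  define b where "b = y + 1"
  have cont: "continuous_on {a..b} std_normal_density"
    unfolding std_normal_density_def by (intro continuous_intros) auto
  have "((\<lambda>z. Phi a + integral {a..z} std_normal_density) has_real_derivative std_normal_density y) (at y within {a..b})"
    using integral_has_real_derivative[OF cont, of y] unfolding a_def b_def
    by (auto intro!: derivative_eq_intros)
  moreover have "at y within {a..b} = at y"
    by (rule at_within_Icc_at) (auto simp: a_def b_def)
  ultimately have D: "((\<lambda>z. Phi a + integral {a..z} std_normal_density) has_real_derivative std_normal_density y) (at y)"
    by simp
  show ?thesis
  proof (rule has_field_derivative_transform_within_open[OF D, of "{a<..<b}"])
    show "y \<in> {a<..<b}" by (auto simp: a_def b_def)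
    show "open {a<..<b}" by simp
    fix z assume "z \<in> {a<..<b}"
    then show "Phi a + integral {a..z} std_normal_density = Phi z"
      using Phi_diff[of a z] by simp
  qed
qed

lemma Phi_sym: "Phi (- x) = 1 - Phi x"
proof -
  define psi where "psi x = Phi x + Phi (-x)" for x
  have D: "(psi has_real_derivative 0) (at z)" for z
  proof -
    have "(psi has_real_derivative (std_normal_density z + std_normal_density (-z) * (-1))) (at z)"
      unfolding psi_def
      by (intro DERIV_add Phi_deriv DERIV_chain2[OF Phi_deriv] derivative_eq_intros) auto
    then show ?thesis by (simp add: std_normal_density_def)
  qed
  have c: "psi z = psi 0" for z
    using DERIV_isconst_all[of psi] D by blast
  have "(psi \<longlongrightarrow> 1 + 0) at_top"
    unfolding psi_def
  proof (intro tendsto_add)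
    show "(Phi \<longlongrightarrow> 1) at_top"
      using real_distribution.cdf_lim_at_top_prob[OF rd_NN] by (simp add: Phi_cdf)
    show "((\<lambda>x. Phi (- x)) \<longlongrightarrow> 0) at_top"
      using finite_borel_measure.cdf_lim_at_bot[OF real_distribution.finite_borel_measure_M[OF rd_NN]] filterlim_uminus_at_bot_at_top
      unfolding Phi_cdf by (rule filterlim_compose)
  qed
  moreover have "psi = (\<lambda>_. psi 0)" using c by auto
  ultimately have "psi 0 = 1"
    by (metis add.right_neutral tendsto_const_iff trivial_limit_at_top_linorder)
  then show ?thesis using c[of x] by (simp add: psi_def)
qed




lemma snd_le: "x^2 \<le> y^2 \<Longrightarrow> std_normal_density y \<le> std_normal_density x"
proof -
  assume "x^2 \<le> y^2"
  then have "exp (- y\<^sup>2 / 2) \<le> exp (- x\<^sup>2 / 2)" by simp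
  then show ?thesis unfolding std_normal_density_def by (rule mult_left_mono) simp
qed

lemma H_deriv: "((\<lambda>m. Phi (b - m) - Phi (a - m)) has_real_derivative
    (std_normal_density (a - m) - std_normal_density (b - m))) (at m)"
proof -
  have "((\<lambda>m. Phi (b - m) - Phi (a - m)) has_real_derivative
    (std_normal_density (b - m) * (0 - 1) - std_normal_density (a - m) * (0 - 1))) (at m)"
    by (intro DERIV_diff DERIV_chain2[OF Phi_deriv] derivative_eq_intros) auto
  then show ?thesis by simp
qed

lemma H_cont: "continuous_on S (\<lambda>m. Phi (b - m) - Phi (a - m))"
  by (rule continuous_at_imp_continuous_on) (auto intro: DERIV_isCont[OF H_deriv])

lemma H_inc:
  assumes "a \<le> b" "m \<le> m'" "m' \<le> (a + b) / 2"
  shows "Phi (b - m) - Phi (a - m) \<le> Phi (b - m') - Phi (a - m')"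
proof (rule DERIV_nonneg_imp_increasing_open[OF assms(2) _ H_cont])
  fix x assume "m < x" "x < m'"
  have "(a - x)^2 \<le> (b - x)^2"
  proof -
    have "(b - x)^2 - (a - x)^2 = (b - a) * (a + b - 2 * x)" by (simp add: power2_eq_square algebra_simps)
    also have "\<dots> \<ge> 0" using assms \<open>x < m'\<close> by (intro mult_nonneg_nonneg) auto
    finally show ?thesis by simp
  qed
  then have "0 \<le> std_normal_density (a - x) - std_normal_density (b - x)" using snd_le by simp
  then show "\<exists>y. ((\<lambda>m. Phi (b - m) - Phi (a - m)) has_real_derivative y) (at x) \<and> 0 \<le> y"
    using H_deriv by blast
qed

lemma H_dec:
  assumes "a \<le> b" "m' \<le> m" "(a + b) / 2 \<le> m'"
  shows "Phi (b - m) - Phi (a - m) \<le> Phi (b - m') - Phi (a - m')"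
proof (rule DERIV_nonpos_imp_decreasing_open[OF assms(2) _ H_cont])
  fix x assume "m' < x" "x < m"
  have "(b - x)^2 \<le> (a - x)^2"
  proof -
    have "(a - x)^2 - (b - x)^2 = (b - a) * (2 * x - a - b)" by (simp add: power2_eq_square algebra_simps)
    also have "\<dots> \<ge> 0" using assms \<open>m' < x\<close> by (intro mult_nonneg_nonneg) auto
    finally show ?thesis by simp
  qed
  then have "std_normal_density (a - x) - std_normal_density (b - x) \<le> 0" using snd_le by simp
  then show "\<exists>y. ((\<lambda>m. Phi (b - m) - Phi (a - m)) has_real_derivative y) (at x) \<and> y \<le> 0"
    using H_deriv by blast
qed

lemma H_max:
  assumes "a \<le> b"
  shows "Phi (b - m) - Phi (a - m) \<le> Phi (b - (a+b)/2) - Phi (a - (a+b)/2)"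
  using H_inc[OF assms, of m "(a+b)/2"] H_dec[OF assms, of "(a+b)/2" m] by (cases "m \<le> (a+b)/2") auto

lemma Phi_meas: "Phi \<in> borel_measurable borel"
  by (rule borel_measurable_mono) (simp add: mono_def Phi_mono)

lemma two_point_int:
  assumes "0 \<le> p" "p \<le> 1" "f \<in> borel_measurable borel"
  shows "(\<integral>m. f m \<partial>two_point x y p) = (1 - p) * f x + p * f y"
  unfolding two_point_def
  using assms by (subst integral_distr) (auto simp: integral_measure_pmf[where A=UNIV] UNIV_bool)

lemma mix_two: "0 \<le> p \<Longrightarrow> p \<le> 1 \<Longrightarrow> mixCDF (two_point x y p) t = (1 - p) * Phi (t - x) + p * Phi (t - y)"
  unfolding mixCDF_def using Phi_meas by (subst two_point_int) auto

lemma pd_two: "prob_dist (two_point x y p)"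
  unfolding prob_dist_def two_point_def
  by (auto intro!: prob_space.prob_space_distr prob_space_measure_pmf)

lemma meas_two: assumes "0 < y" "0 \<le> p" "p \<le> 1" shows "measure (two_point 0 y p) {0<..} = p"
proof -
  have "(\<lambda>b. if b then y else 0) -` {0<..} = {True}" using assms by (auto split: if_splits)
  then show ?thesis unfolding two_point_def using assms
    by (subst measure_distr) (auto simp: measure_pmf_single)
qed




declare Phi_meas[measurable]

lemma snd_prod: "c^2 + d^2 \<le> a^2 + b^2 \<Longrightarrow>
  std_normal_density a * std_normal_density b \<le> std_normal_density c * std_normal_density d"
proof -
  assume h: "c^2 + d^2 \<le> a^2 + b^2"
  have e: "std_normal_density x * std_normal_density y = (1 / sqrt (2*pi))^2 * exp (- (x^2 + y^2) / 2)" for x y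
    by (simp add: std_normal_density_def power2_eq_square exp_add[symmetric] field_simps)
  have "exp (- (a^2 + b^2) / 2) \<le> exp (- (c^2 + d^2) / 2)" using h by simp
  then show ?thesis unfolding e by (rule mult_left_mono) simp
qed

definition kk :: "real \<Rightarrow> real \<Rightarrow> real \<Rightarrow> real" where
  "kk t g m = std_normal_density t * Phi (t - m) - std_normal_density (t - 2*g) * Phi (2*g - t - m)"

lemma kk_deriv: "(kk t g has_real_derivative
   (- std_normal_density t * std_normal_density (t - m) + std_normal_density (t - 2*g) * std_normal_density (2*g - t - m))) (at m)"
proof -
  have "(kk t g has_real_derivative
   (std_normal_density t * (std_normal_density (t - m) * (0 - 1)) - std_normal_density (t - 2*g) * (std_normal_density (2*g - t - m) * (0 - 1)))) (at m)"
    unfolding kk_def[abs_def]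
    by (intro DERIV_diff DERIV_cmult DERIV_chain2[OF Phi_deriv] derivative_eq_intros) auto
  then show ?thesis by simp
qed

lemma kk_cont: "continuous_on S (kk t g)"
  by (rule continuous_at_imp_continuous_on) (auto intro: DERIV_isCont[OF kk_deriv])

lemma kk_dec:
  assumes "t < g" "m \<le> m'" "m' \<le> 2*g"
  shows "kk t g m' \<le> kk t g m"
proof (rule DERIV_nonpos_imp_decreasing_open[OF assms(2) _ kk_cont])
  fix x assume "m < x" "x < m'"
  have "t^2 + (t-x)^2 - ((t - 2*g)^2 + (2*g - t - x)^2) = (4*g - 4*t) * (x - 2*g)"
    by (simp add: power2_eq_square algebra_simps)
  also have "\<dots> \<le> 0" using assms \<open>x < m'\<close> by (intro mult_nonneg_nonpos) auto
  finally have "t^2 + (t-x)^2 \<le> (t - 2*g)^2 + (2*g - t - x)^2" by simp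
  then have "std_normal_density (t - 2*g) * std_normal_density (2*g - t - x) \<le> std_normal_density t * std_normal_density (t - x)"
    by (rule snd_prod)
  then have "- std_normal_density t * std_normal_density (t - x) + std_normal_density (t - 2*g) * std_normal_density (2*g - t - x) \<le> 0" by simp
  then show "\<exists>y. (kk t g has_real_derivative y) (at x) \<and> y \<le> 0"
    using kk_deriv by blast
qed

lemma kk_inc:
  assumes "t < g" "m' \<le> m" "2*g \<le> m'"
  shows "kk t g m' \<le> kk t g m"
proof (rule DERIV_nonneg_imp_increasing_open[OF assms(2) _ kk_cont])
  fix x assume "m' < x" "x < m"
  have "(t - 2*g)^2 + (2*g - t - x)^2 - (t^2 + (t-x)^2) = (4*g - 4*t) * (2*g - x)"
    by (simp add: power2_eq_square algebra_simps)
  also have "\<dots> \<le> 0" using assms \<open>m' < x\<close> by (intro mult_nonneg_nonpos) auto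
  finally have "(t - 2*g)^2 + (2*g - t - x)^2 \<le> t^2 + (t-x)^2" by simp
  then have "std_normal_density t * std_normal_density (t - x) \<le> std_normal_density (t - 2*g) * std_normal_density (2*g - t - x)"
    by (rule snd_prod)
  then have "0 \<le> - std_normal_density t * std_normal_density (t - x) + std_normal_density (t - 2*g) * std_normal_density (2*g - t - x)" by simp
  then show "\<exists>y. (kk t g has_real_derivative y) (at x) \<and> 0 \<le> y"
    using kk_deriv by blast
qed

lemma kk_min: "t < g \<Longrightarrow> kk t g (2*g) \<le> kk t g m"
  using kk_dec[of t g m "2*g"] kk_inc[of t g "2*g" m] by (cases "m \<le> 2*g") auto

lemma kk_meas[measurable]: "kk t g \<in> borel_measurable borel"
  unfolding kk_def[abs_def] by measurable

lemma pd_meas: "prob_dist \<nu> \<Longrightarrow> f \<in> borel_measurable borel \<Longrightarrow> f \<in> borel_measurable \<nu>"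
  unfolding prob_dist_def using measurable_cong_sets by blast

lemma int_Phi: assumes "prob_dist \<nu>" shows "integrable \<nu> (\<lambda>m. Phi (t - m))"
proof -
  interpret prob_space \<nu> using assms by (simp add: prob_dist_def)
  show ?thesis
  proof (rule integrable_const_bound[where B=1])
    show "AE x in \<nu>. norm (Phi (t - x)) \<le> 1" using Phi_nonneg Phi_le1 by simp
    show "(\<lambda>m. Phi (t - m)) \<in> borel_measurable \<nu>" by (rule pd_meas[OF assms]) measurable
  qed
qed

lemma mix_bounds: assumes "prob_dist \<nu>" shows "0 \<le> mixCDF \<nu> t" "mixCDF \<nu> t \<le> 1"
proof -
  interpret prob_space \<nu> using assms by (simp add: prob_dist_def)
  show "0 \<le> mixCDF \<nu> t" unfolding mixCDF_def by (rule integral_nonneg_AE) (simp add: Phi_nonneg)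
  have "mixCDF \<nu> t \<le> (\<integral>m. 1 \<partial>\<nu>)" unfolding mixCDF_def
    by (rule integral_mono[OF int_Phi[OF assms]]) (auto simp: Phi_le1)
  then show "mixCDF \<nu> t \<le> 1" using prob_space by simp
qed

lemma int_kk: assumes "prob_dist \<nu>"
  shows "(\<integral>m. kk t g m \<partial>\<nu>) = std_normal_density t * mixCDF \<nu> t - std_normal_density (t - 2*g) * mixCDF \<nu> (2*g - t)"
  unfolding kk_def mixCDF_def
  using int_Phi[OF assms] by (simp add: integral_diff)




theorem lemma9:
  fixes \<zeta> \<gamma> :: real
  assumes "0 < \<zeta>" "\<zeta> \<le> 1" "0 < \<gamma>" "\<gamma> \<le> 1"
  shows "prob_dist (two_point 0 (2 * \<gamma>) (\<zeta> / 2))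
    \<and> measure (two_point 0 (2 * \<gamma>) (\<zeta> / 2)) {0<..} \<le> \<zeta> / 2
    \<and> (\<forall>\<nu>. prob_dist \<nu> \<and> measure \<nu> {0<..} \<le> \<zeta> / 2 \<longrightarrow>
          cdf_dist (two_point 0 (2 * \<gamma>) (\<zeta> / 2)) (two_point 0 \<gamma> \<zeta>)
            \<le> cdf_dist \<nu> (two_point 0 \<gamma> \<zeta>))"
proof -
  let ?O = "two_point 0 (2 * \<gamma>) (\<zeta> / 2)"
  let ?S = "two_point 0 \<gamma> \<zeta>"
  have p1: "prob_dist ?O" by (rule pd_two)
  have p2: "measure ?O {0<..} \<le> \<zeta> / 2" using meas_two[of "2*\<gamma>" "\<zeta>/2"] assms by simp
  have mO: "mixCDF ?O t = (1 - \<zeta>/2) * Phi t + \<zeta>/2 * Phi (t - 2*\<gamma>)" for t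
    using mix_two[of "\<zeta>/2" 0 "2*\<gamma>" t] assms by simp
  have mS: "mixCDF ?S t = (1 - \<zeta>) * Phi t + \<zeta> * Phi (t - \<gamma>)" for t
    using mix_two[of "\<zeta>" 0 "\<gamma>" t] assms by simp
  define DO where "DO t = mixCDF ?O t - mixCDF ?S t" for t
  have DO_f: "DO t = \<zeta>/2 * (Phi t + Phi (t - 2*\<gamma>) - 2 * Phi (t - \<gamma>))" for t
    unfolding DO_def mO mS by (simp add: algebra_simps)
  have DO_anti: "DO (2*\<gamma> - t) = - DO t" for t
  proof -
    have "Phi (2*\<gamma> - t) = 1 - Phi (t - 2*\<gamma>)" using Phi_sym[of "t - 2*\<gamma>"] by simp
    moreover have "Phi (2*\<gamma> - t - 2*\<gamma>) = 1 - Phi t" using Phi_sym[of t] by simp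
    moreover have "Phi (2*\<gamma> - t - \<gamma>) = 1 - Phi (t - \<gamma>)" using Phi_sym[of "t - \<gamma>"] by simp
    ultimately have "Phi (2*\<gamma> - t) + Phi (2*\<gamma> - t - 2*\<gamma>) - 2 * Phi (2*\<gamma> - t - \<gamma>)
       = - (Phi t + Phi (t - 2*\<gamma>) - 2 * Phi (t - \<gamma>))" by linarith
    note e = this
    show ?thesis unfolding DO_f[of "2*\<gamma> - t"] DO_f[of t] e by (simp add: algebra_simps)
  qed
  have DO_nn: "0 \<le> DO t" if "t \<le> \<gamma>" for t
  proof -
    have "Phi (2*\<gamma> - t - 0) - Phi (t - 0) \<le> Phi (2*\<gamma> - t - (t + (2*\<gamma> - t))/2) - Phi (t - (t + (2*\<gamma> - t))/2)"
      by (rule H_max) (use that in simp)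
    then have h: "Phi (2*\<gamma> - t) - Phi t \<le> Phi (\<gamma> - t) - Phi (t - \<gamma>)" by simp
    have "Phi (2*\<gamma> - t) = 1 - Phi (t - 2*\<gamma>)" using Phi_sym[of "t - 2*\<gamma>"] by simp
    moreover have "Phi (\<gamma> - t) = 1 - Phi (t - \<gamma>)" using Phi_sym[of "t - \<gamma>"] by simp
    ultimately have "0 \<le> Phi t + Phi (t - 2*\<gamma>) - 2 * Phi (t - \<gamma>)" using h by simp
    then show ?thesis unfolding DO_f using assms by simp
  qed
  have main: "cdf_dist ?O ?S \<le> cdf_dist \<nu> ?S" if nu: "prob_dist \<nu>" "measure \<nu> {0<..} \<le> \<zeta> / 2" for \<nu>
  proof -
    interpret prob_space \<nu> using nu by (simp add: prob_dist_def)
    define S where "S = cdf_dist \<nu> ?S"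
    have bdd: "bdd_above (range (\<lambda>t. \<bar>mixCDF \<nu> t - mixCDF ?S t\<bar>))"
    proof (rule bdd_aboveI2)
      fix t show "\<bar>mixCDF \<nu> t - mixCDF ?S t\<bar> \<le> 1"
        using mix_bounds[OF nu(1), of t] mix_bounds[OF pd_two, of "0" \<gamma> \<zeta> t] by linarith
    qed
    have up: "\<bar>mixCDF \<nu> t - mixCDF ?S t\<bar> \<le> S" for t
      unfolding S_def cdf_dist_def by (rule cSUP_upper[OF _ bdd]) simp
    have S0: "0 \<le> S" using up[of 0] by linarith
    have key: "DO t \<le> S" if "t < \<gamma>" for t
    proof -
      define a where "a = std_normal_density t"
      define b where "b = std_normal_density (t - 2*\<gamma>)"
      have a0: "0 < a" "0 < b" unfolding a_def b_def by (auto intro: normal_density_pos)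
      define c where "c = kk t \<gamma> 0 - kk t \<gamma> (2*\<gamma>)"
      have c0: "0 \<le> c" unfolding c_def using kk_min[OF that] by simp
      have pw: "kk t \<gamma> 0 - c * indicator {0<..} m \<le> kk t \<gamma> m" for m
      proof (cases "m \<le> 0")
        case True then show ?thesis using kk_dec[OF that True] assms by (simp add: indicator_def)
      next
        case False then show ?thesis using kk_min[OF that, of m] by (simp add: indicator_def c_def)
      qed
      have s: "{0<..} \<in> sets \<nu>" using nu(1) by (simp add: prob_dist_def)
      have ii: "integrable \<nu> (\<lambda>m. c * indicator {0<..} m :: real)"
        by (rule integrable_mult_right) (rule integrable_real_indicator[OF s], simp add: less_top[symmetric])
      have intk: "integrable \<nu> (kk t \<gamma>)"
        unfolding kk_def[abs_def] using int_Phi[OF nu(1)] by simp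
      have "(\<integral>m. kk t \<gamma> 0 - c * indicator {0<..} m \<partial>\<nu>) \<le> (\<integral>m. kk t \<gamma> m \<partial>\<nu>)"
        by (rule integral_mono[OF _ intk pw], rule Bochner_Integration.integrable_diff[OF _ ii]) simp
      moreover have "(\<integral>m. kk t \<gamma> 0 - c * indicator {0<..} m \<partial>\<nu>) = kk t \<gamma> 0 - c * measure \<nu> {0<..}"
        using prob_space by (subst Bochner_Integration.integral_diff[OF _ ii]) (auto simp: s)
      moreover have "kk t \<gamma> 0 - c * (\<zeta>/2) \<le> kk t \<gamma> 0 - c * measure \<nu> {0<..}"
        using mult_left_mono[OF nu(2) c0] by simp
      ultimately have low: "kk t \<gamma> 0 - c * (\<zeta>/2) \<le> (\<integral>m. kk t \<gamma> m \<partial>\<nu>)" by linarith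
      have EO: "(\<integral>m. kk t \<gamma> m \<partial>?O) = (1 - \<zeta>/2) * kk t \<gamma> 0 + \<zeta>/2 * kk t \<gamma> (2*\<gamma>)"
        using assms by (subst two_point_int) auto
      have EO2: "(\<integral>m. kk t \<gamma> m \<partial>?O) = a * mixCDF ?O t - b * mixCDF ?O (2*\<gamma> - t)"
        using int_kk[OF p1] by (simp add: a_def b_def)
      have En: "(\<integral>m. kk t \<gamma> m \<partial>\<nu>) = a * mixCDF \<nu> t - b * mixCDF \<nu> (2*\<gamma> - t)"
        using int_kk[OF nu(1)] by (simp add: a_def b_def)
      have "(a + b) * DO t = a * DO t - b * DO (2*\<gamma> - t)" using DO_anti[of t] by (simp add: algebra_simps)
      also have "\<dots> \<le> a * (mixCDF \<nu> t - mixCDF ?S t) - b * (mixCDF \<nu> (2*\<gamma> - t) - mixCDF ?S (2*\<gamma> - t))"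
        using low EO EO2 En unfolding DO_def c_def by (simp add: algebra_simps)
      also have "\<dots> \<le> a * S + b * S"
      proof -
        have "a * (mixCDF \<nu> t - mixCDF ?S t) \<le> a * S"
          using up[of t] a0 by (intro mult_left_mono) auto
        moreover have "- (b * (mixCDF \<nu> (2*\<gamma> - t) - mixCDF ?S (2*\<gamma> - t))) \<le> b * S"
        proof -
          have "- (mixCDF \<nu> (2*\<gamma> - t) - mixCDF ?S (2*\<gamma> - t)) \<le> S" using up[of "2*\<gamma> - t"] by linarith
          from mult_left_mono[OF this, of b] a0 show ?thesis by (simp add: algebra_simps)
        qed
        ultimately show ?thesis by linarith
      qed
      finally have "(a + b) * DO t \<le> (a + b) * S" by (simp add: algebra_simps)
      then show ?thesis using a0 by simp
    qed
    have bound: "\<And>t. \<bar>mixCDF ?O t - mixCDF ?S t\<bar> \<le> S"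
    proof -
      fix t
      show "\<bar>mixCDF ?O t - mixCDF ?S t\<bar> \<le> S"
      proof -
        consider "t < \<gamma>" | "t = \<gamma>" | "t > \<gamma>" by linarith
        then have "\<bar>DO t\<bar> \<le> S"
        proof cases
          case 1 then show ?thesis using key DO_nn by simp
        next
          case 2 then have "DO t = 0" using DO_anti[of t] by simp
          then show ?thesis using S0 by simp
        next
          case 3
          then have "\<bar>DO t\<bar> = DO (2*\<gamma> - t)" using DO_anti[of t] DO_nn[of "2*\<gamma> - t"] by simp
          then show ?thesis using key[of "2*\<gamma> - t"] 3 by simp
        qed
        then show ?thesis by (simp add: DO_def)
      qed
    qed
    have "cdf_dist ?O ?S \<le> S" unfolding cdf_dist_def
      by (rule cSUP_least) (auto intro: bound)
    then show ?thesis by (simp add: S_def)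
  qed
  show ?thesis using p1 p2 main by blast
qed


end
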